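(* In the setting described in the context, if type A blowup occurs, then either $0<v_0<1$ and $\omega_0>-\frac{\nu}{2}f_0(v_0)$, or $v_0>1$ and $\omega_0<-\frac{\nu}{2}f_0(v_0)$.
   Context: Fix $\nu>0$, $v_0>0$ with $v_0\neq1$, and $\omega_0\in\mathbb{R}$. Consider the real ODE system $\frac{d\omega_{-2,i}}{dt}=\omega_{-2,i}^2\frac{1-2v_c^2+5v_c^4}{4v_c^2(1-v_c^2)^2}-\nu\omega_{-2,i}$, $\frac{dv_c}{dt}=-\omega_{-2,i}\frac{1+v_c^2}{4v_c(1-v_c^2)}$ with $v_c(0)=v_0$, $\omega_{-2,i}(0)=\omega_0$; its solution (continued through $v_c=1$) is characterized as follows. Let $F(v)=\frac{v(v^2-1)}{(v^2+1)^2}+\arctan v$, which is a strictly increasing bijection from $(0,\infty)$ onto $(0,\pi/2)$, and let $G(t)=F(v_0)+\frac{2\omega_0 v_0(1-e^{-\nu t})}{\nu(v_0^2-1)(v_0^2+1)^2}$. Then $v_c(t)$ is defined by $F(v_c(t))=G(t)$ for as long as $G(t)\in(0,\pi/2)$, and $\omega_{-2,i}(t)=\omega_0e^{-\nu t}\frac{v_0}{v_c(t)}\frac{v_c(t)^2-1}{v_0^2-1}\left(\frac{v_c(t)^2+1}{v_0^2+1}\right)^2$. Type A blowup means: there is a finite $t_c>0$ with $v_c(t)>0$ on $[0,t_c)$ and $v_c(t)\to0^+$ as $t\to t_c^-$. Type B blowup means: there is a finite $t_c>0$ with $v_c(t)\in(0,\infty)$ on $[0,t_c)$ and $v_c(t)\to+\infty$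 as $t\to t_c^-$. Here $f_0(x)=(x^2-1)^2+\frac{(x^2+1)^2}{x}(x^2-1)\arctan(x)$ and $f_\infty(x)=(x^2-1)^2+\frac{(x^2+1)^2}{x}(x^2-1)\left(\arctan(x)-\frac{\pi}{2}\right)$ for $x>0$. *)

theory Defs
  imports "HOL-Analysis.Analysis"
begin

definition F :: "real \<Rightarrow> real" where
  "F v = v * (v^2 - 1) / (v^2 + 1)^2 + arctan v"

definition G :: "real \<Rightarrow> real \<Rightarrow> real \<Rightarrow> real \<Rightarrow> real" where
  "G \<nu> v0 \<omega>0 t = F v0 + 2 * \<omega>0 * v0 * (1 - exp (- \<nu> * t)) / (\<nu> * (v0^2 - 1) * (v0^2 + 1)^2)"

definition f0 :: "real \<Rightarrow> real" where
  "f0 x = (x^2 - 1)^2 + (x^2 + 1)^2 / x * (x^2 - 1) * arctan x"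

definition f_inf :: "real \<Rightarrow> real" where
  "f_inf x = (x^2 - 1)^2 + (x^2 + 1)^2 / x * (x^2 - 1) * (arctan x - pi / 2)"

text \<open>v_c(t) is the positive solution of F(v_c(t)) = G(t), defined while G(t) lies in (0, pi/2).\<close>
definition typeA_blowup :: "real \<Rightarrow> real \<Rightarrow> real \<Rightarrow> bool" where
  "typeA_blowup \<nu> v0 \<omega>0 \<longleftrightarrow>
    (\<exists>tc > 0. \<exists>vc :: real \<Rightarrow> real.
       (\<forall>t \<in> {0..<tc}. vc t > 0 \<and> F (vc t) = G \<nu> v0 \<omega>0 t) \<and>
       (vc \<longlongrightarrow> 0) (at_left tc))"

end

theory Submission
  imports Defs
begin

lemma alg: fixes x :: real assumes p: "x^2+1 > 0"
  shows "(((x^2 - 1) + 2 * x * x) * (x^2 + 1)^2 - x * (x^2 - 1) * (2 * (2 * x * (x^2 + 1))))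
        / ((x^2 + 1)^2 * (x^2 + 1)^2) + 1 / (1 + x^2) = 8 * x^2 / (x^2 + 1) ^ 3"
proof -
  have n: "((x^2 - 1) + 2 * x * x) * (x^2 + 1)^2 - x * (x^2 - 1) * (2 * (2 * x * (x^2 + 1)))
      = (x^2+1) * (6*x^2 - x^4 - 1)" by algebra
  have "(x^2 + 1)^2 * (x^2 + 1)^2 = (x^2+1) * (x^2+1)^3" by algebra
  hence a: "(((x^2 - 1) + 2 * x * x) * (x^2 + 1)^2 - x * (x^2 - 1) * (2 * (2 * x * (x^2 + 1))))
        / ((x^2 + 1)^2 * (x^2 + 1)^2) = (6*x^2 - x^4 - 1) / (x^2+1)^3"
    using p n by simp
  have b: "1 / (1 + x^2) = (x^2+1)^2 / (x^2+1)^3" 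
  proof -
    have e: "(x^2+1)^3 = (1+x^2)*(x^2+1)^2" by algebra
    show ?thesis unfolding e using p by simp
  qed
  have c: "(6*x^2 - x^4 - 1) + (x^2+1)^2 = 8*x^2" by algebra
  show ?thesis unfolding a b add_divide_distrib[symmetric] c ..
qed
lemma F_deriv: fixes x :: real shows "(F has_real_derivative (8*x^2/(x^2+1)^3)) (at x)"
proof -
  have p: "x^2+1 > 0" using zero_le_power2[of x] by linarith
  have p2: "1+x^2 \<noteq> 0" using p by simp
  show ?thesis unfolding F_def[abs_def]
    apply (rule derivative_eq_intros refl)+
    using p apply simp
    apply (rule derivative_eq_intros refl)+
    using alg[OF p] by (simp add: inverse_eq_divide)
qed

lemma F_pos: assumes "v > 0" shows "F v > 0"
proof -
  have F0: "F 0 = 0" by (simp add: F_def)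
  obtain z where z: "0 < z" "z < v" and eq: "F v - F 0 = (v - 0) * (8*z^2/(z^2+1)^3)"
    using MVT2[of 0 v F "\<lambda>y. 8*y^2/(y^2+1)^3"] assms F_deriv by auto
  have c: "8*z^2/(z^2+1)^3 > 0" using z by (simp add: add_pos_nonneg)
  have "(v - 0) * (8*z^2/(z^2+1)^3) > 0" using c assms by (intro mult_pos_pos) auto
  thus ?thesis using eq F0 by linarith
qed

lemma F_cont: "isCont F x"
  using F_deriv DERIV_isCont by blast

theorem lemma3p2:
  fixes \<nu> v0 \<omega>0 :: real
  assumes "\<nu> > 0" and "v0 > 0" and "v0 \<noteq> 1"
    and "typeA_blowup \<nu> v0 \<omega>0"
  shows "(0 < v0 \<and> v0 < 1 \<and> \<omega>0 > - \<nu> / 2 * f0 v0) \<or>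
         (v0 > 1 \<and> \<omega>0 < - \<nu> / 2 * f0 v0)"
proof -
  obtain tc vc where tc: "tc > 0" and vc: "\<forall>t \<in> {0..<tc}. vc t > 0 \<and> F (vc t) = G \<nu> v0 \<omega>0 t"
    and lim: "(vc \<longlongrightarrow> 0) (at_left tc)"
    using assms(4) unfolding typeA_blowup_def by blast
  have "((\<lambda>t. F (vc t)) \<longlongrightarrow> F 0) (at_left tc)"
    using isCont_tendsto_compose[OF F_cont lim] .
  hence l1: "((\<lambda>t. F (vc t)) \<longlongrightarrow> 0) (at_left tc)" by (simp add: F_def)
  have ev: "eventually (\<lambda>t. F (vc t) = G \<nu> v0 \<omega>0 t) (at_left tc)"
    unfolding eventually_at_left_field using tc vc by (intro exI[of _ 0]) auto
  have l2: "((G \<nu> v0 \<omega>0) \<longlongrightarrow> 0) (at_left tc)"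
    using tendsto_cong[OF ev] l1 by simp
  have d: "v0^2 - 1 \<noteq> 0" using assms(2,3)
    by (auto simp: power2_eq_1_iff)
  have q: "(v0^2+1)^2 > 0" using zero_le_power2[of v0] by (intro zero_less_power) linarith
  have "isCont (G \<nu> v0 \<omega>0) tc" unfolding G_def by (intro continuous_intros) (use d q assms(1) in auto)
  hence "((G \<nu> v0 \<omega>0) \<longlongrightarrow> G \<nu> v0 \<omega>0 tc) (at_left tc)"
    unfolding isCont_def by (rule tendsto_within_subset) simp
  hence G0: "G \<nu> v0 \<omega>0 tc = 0" using l2 tendsto_unique[OF trivial_limit_at_left_real] by blast
  define s where "s = 1 - exp (- \<nu> * tc)"
  have s: "0 < s" "s < 1" using tc assms(1) by (auto simp: s_def)
  have Fp: "F v0 > 0" using F_pos assms(2) by simp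
  have f0F: "f0 v0 = (v0^2+1)^2*(v0^2-1)/v0 * F v0"
  proof -
    have nz: "(v0^2+1)^2 \<noteq> 0" "v0 \<noteq> 0" using assms(2) zero_le_power2[of v0]
      by (auto simp del: zero_le_power2) (smt (verit) zero_le_power2)
    have "(v0^2+1)^2/v0*(v0^2-1) * (v0*(v0^2-1)/(v0^2+1)^2) = (v0^2-1)^2"
      using nz by (simp add: power2_eq_square[of "v0^2-1"])
    thus ?thesis unfolding f0_def F_def distrib_left by simp
  qed
  have key: "\<omega>0 * s = - \<nu> / 2 * f0 v0"
    using G0 assms(1,2) d q unfolding G_def s_def[symmetric] f0F
    by (simp add: field_simps)
  show ?thesis
  proof (cases "v0 < 1")
    case True
    have "v0^2 < 1" using True assms(2) using power_strict_mono[of v0 1 2] by simp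
    hence "f0 v0 < 0" unfolding f0F using assms(2) Fp q
      by (intro mult_neg_pos divide_neg_pos mult_pos_neg) auto
    hence "\<omega>0 * s > 0" using key assms(1) mult_pos_neg[of "\<nu>" "f0 v0"] by simp
    hence "\<omega>0 > 0" using s by (simp add: zero_less_mult_iff)
    hence "\<omega>0 > \<omega>0 * s" using s by simp
    thus ?thesis using key True assms(2) by auto
  next
    case False
    hence g: "v0 > 1" using assms(3) by simp
    have "v0^2 > 1" using g by (simp add: one_less_power)
    hence "f0 v0 > 0" unfolding f0F using assms(2) Fp q by simp
    hence "\<omega>0 * s < 0" using key assms(1) mult_pos_pos[of "\<nu>" "f0 v0"] by simp
    hence "\<omega>0 < 0" using s by (simp add: mult_less_0_iff)
    hence "\<omega>0 < \<omega>0 * s" using s by (simp add: mult_less_cancel_left)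
    thus ?thesis using key g by auto
  qed
qed

end
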